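(* For every integer $N\ge2$ and generic $t,\Delta$ (so that $h_N(0)\neq0$ and $1-2\Delta t+t^2\ne0$), $$h_{N-1}'(1)=\frac{1}{1-2\Delta t+t^2}\left\{\frac{h_N'(0)}{h_N(0)}-t^2\right\}.$$
   Context: Define functions $\phi_j(t)$ by $\phi_0\equiv1$ and $\phi_{j+1}(t)=t\frac{d}{dt}\big[(t-2\Delta+t^{-1})\phi_j(t)\big]$. For $N\ge1$ the polynomial $h_N(z)=h_N(z;t,\Delta)$ is $$h_N(z)=(N-1)!\Big((t-2\Delta+t^{-1})\frac{z}{z-1}\Big)^{N-1}\frac{\det\big[M_{ij}\big]_{i,j=1}^N}{\det[\phi_{i+j-2}(t)]_{i,j=1}^N},$$ where $M_{ij}=\phi_{i+j-2}(t)$ for $j=1,\dots,N-1$ and $M_{iN}=\phi_{i-1}(tz)$. Primes denote derivatives in $z$. (E.g. $h_1=1$, $h_2(z)=(1+t^2z)/(1+t^2)$.) *)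

theory Defs
  imports "HOL-Analysis.Analysis" "Jordan_Normal_Form.Determinant" "HOL-Computational_Algebra.Polynomial"
begin

primrec phi :: "real \<Rightarrow> nat \<Rightarrow> real \<Rightarrow> real" where
  "phi \<Delta> 0 = (\<lambda>t. 1)"
| "phi \<Delta> (Suc j) = (\<lambda>t. t * deriv (\<lambda>s. (s - 2 * \<Delta> + 1 / s) * phi \<Delta> j s) t)"

text \<open>Hankel matrix [phi_(i+j-2)(t)]_(i,j=1..N), 0-indexed.\<close>
definition hankel_mat :: "real \<Rightarrow> real \<Rightarrow> nat \<Rightarrow> real mat" where
  "hankel_mat \<Delta> t N = mat N N (\<lambda>(i, j). phi \<Delta> (i + j) t)"

definition M_mat :: "real \<Rightarrow> real \<Rightarrow> nat \<Rightarrow> real \<Rightarrow> real mat" where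
  "M_mat \<Delta> t N z = mat N N (\<lambda>(i, j). if j = N - 1 then phi \<Delta> i (t * z) else phi \<Delta> (i + j) t)"

definition h_raw :: "real \<Rightarrow> real \<Rightarrow> nat \<Rightarrow> real \<Rightarrow> real" where
  "h_raw \<Delta> t N z = fact (N - 1) * ((t - 2 * \<Delta> + 1 / t) * (z / (z - 1))) ^ (N - 1)
      * det (M_mat \<Delta> t N z) / det (hankel_mat \<Delta> t N)"

text \<open>h_N as a polynomial in z: the (unique) polynomial agreeing with the defining
  expression away from the removable singularities z = 0 and z = 1.\<close>
definition h_poly :: "real \<Rightarrow> real \<Rightarrow> nat \<Rightarrow> real poly" where
  "h_poly \<Delta> t N = (THE p. \<forall>z. z \<noteq> 0 \<and> z \<noteq> 1 \<longrightarrow> poly p z = h_raw \<Delta> t N z)"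

end

theory Submission
  imports Defs "HOL-Computational_Algebra.Polynomial_FPS"
begin


fun pp :: "real \<Rightarrow> nat \<Rightarrow> real poly" where
  "pp D 0 = 1"
| "pp D (Suc j) = [:0,1:] * pderiv ([:1,-2*D,1:] * pp D j) - Polynomial.smult (of_nat (Suc j)) ([:1,-2*D,1:] * pp D j)"

lemma phi_pp: "s \<noteq> 0 \<Longrightarrow> phi D j s = poly (pp D j) s / s ^ j"
proof (induction j arbitrary: s)
  case 0 then show ?case by simp
next
  case (Suc j)
  define r where "r = [:1,-2*D,1:] * pp D j"
  have ev: "eventually (\<lambda>w. (w - 2*D + 1/w) * phi D j w = poly r w / w^(Suc j)) (nhds s)"
  proof -
    have "eventually (\<lambda>w. w \<in> {w. w \<noteq> 0}) (nhds s)"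
      using Suc.prems by (intro eventually_nhds_in_open) (auto simp: open_Collect_neq)
    then show ?thesis
    proof (rule eventually_mono)
      fix w :: real assume "w \<in> {w. w \<noteq> 0}"
      then have w: "w \<noteq> 0" by simp
      show "(w - 2*D + 1/w) * phi D j w = poly r w / w^(Suc j)"
        using w by (simp add: Suc.IH[OF w] r_def field_simps power2_eq_square)
    qed
  qed
  have der: "((\<lambda>w. poly r w / w^(Suc j)) has_field_derivative
      (poly (pderiv r) s * s^(Suc j) - poly r s * (real (Suc j) * s^(Suc j - Suc 0))) / (s^(Suc j) * s^(Suc j))) (at s)"
    by (rule DERIV_divide[OF poly_DERIV DERIV_pow]) (use Suc.prems in simp)
  have "deriv (\<lambda>w. (w - 2*D + 1/w) * phi D j w) s = deriv (\<lambda>w. poly r w / w^(Suc j)) s"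
    using ev by (rule deriv_cong_ev) simp
  also have "\<dots> = (poly (pderiv r) s * s^(Suc j) - poly r s * (real (Suc j) * s^(Suc j - Suc 0))) / (s^(Suc j) * s^(Suc j))"
    using der by (rule DERIV_imp_deriv)
  finally have "phi D (Suc j) s = s * ((poly (pderiv r) s * s^(Suc j) - poly r s * (real (Suc j) * s^(Suc j - Suc 0))) / (s^(Suc j) * s^(Suc j)))"
    by simp
  also have "\<dots> = poly (pp D (Suc j)) s / s ^ Suc j"
  proof -
    have pps: "poly (pp D (Suc j)) s = s * poly (pderiv r) s - real (Suc j) * poly r s"
      by (simp add: r_def)
    show ?thesis unfolding pps using Suc.prems
      by (simp add: field_simps power2_eq_square)
  qed
  finally show ?case .
qed

lemma pp_coeff0: "coeff (pp D j) 0 = (-1)^j * fact j"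
  by (induction j) (simp_all add: coeff_pderiv)

lemma pp_coeff1: "real j * coeff (pp D j) 1 = - D * real j * (real j - 1) * coeff (pp D j) 0"
proof (induction j)
  case 0 then show ?case by simp
next
  case (Suc j)
  have c1: "coeff (pp D (Suc j)) 1 = - real j * (coeff (pp D j) 1 - 2 * D * coeff (pp D j) 0)"
    by (simp add: coeff_pderiv algebra_simps)
  have c0: "coeff (pp D (Suc j)) 0 = - real (Suc j) * coeff (pp D j) 0"
    by (simp add: coeff_pderiv algebra_simps)
  show ?case unfolding c1 c0 using Suc.IH
    by (simp add: algebra_simps) (metis (no_types, opaque_lifting) distrib_left mult.commute mult.left_commute)
qed

definition TT :: "real fps \<Rightarrow> real fps \<Rightarrow> real fps" where
  "TT al f = (1 + fps_X) * fps_deriv (al * f)"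

definition TTG :: "real fps \<Rightarrow> nat \<Rightarrow> real fps \<Rightarrow> real fps" where
  "TTG al n G = of_nat (Suc n) * (1 + fps_X) * (al * G) + fps_X * (1 + fps_X) * fps_deriv (al * G)"

lemma TT_X: "TT al (fps_X ^ Suc n * G) = fps_X ^ n * TTG al n G"
proof -
  have d: "fps_deriv (fps_X ^ Suc n :: real fps) = of_nat (Suc n) * fps_X ^ n"
    by (subst fps_deriv_power) (simp only: fps_of_nat fps_deriv_fps_X mult_1_right diff_Suc_1)
  have "fps_deriv (al * (fps_X ^ Suc n * G)) = fps_deriv (fps_X ^ Suc n * (al * G))"
    by (simp add: algebra_simps)
  also have "\<dots> = fps_deriv (fps_X ^ Suc n) * (al * G) + fps_X ^ Suc n * fps_deriv (al * G)"
    by (simp only: fps_deriv_mult add.commute)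
  also have "\<dots> = of_nat (Suc n) * fps_X ^ n * (al * G) + fps_X * fps_X ^ n * fps_deriv (al * G)"
    unfolding d by simp
  finally have eqd: "fps_deriv (al * (fps_X ^ Suc n * G)) = of_nat (Suc n) * fps_X ^ n * (al * G) + fps_X * fps_X ^ n * fps_deriv (al * G)" .
  show ?thesis unfolding TT_def TTG_def eqd by (simp only: algebra_simps)
qed

lemma TT_nth0: "fps_nth (TT al f) 0 = fps_nth (al * f) 1"
  by (simp add: TT_def)

lemma TTG_nth0: "fps_nth (TTG al n G) 0 = real (Suc n) * fps_nth al 0 * fps_nth G 0"
  by (simp add: TTG_def)

lemma TTG_nth1: "fps_nth (TTG al n G) 1 = real (Suc n) * fps_nth al 0 * fps_nth G 0
   + real (Suc (Suc n)) * (fps_nth al 0 * fps_nth G 1 + fps_nth al 1 * fps_nth G 0)"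
  by (simp add: TTG_def fps_mult_nth_1 algebra_simps)

lemma L0: "j < n \<Longrightarrow> fps_nth ((TT al ^^ j) (fps_X ^ n * G)) 0 = 0"
proof (induction j arbitrary: n G)
  case 0 then show ?case by simp
next
  case (Suc j)
  then obtain n' where n: "n = Suc n'" by (cases n) auto
  have "(TT al ^^ Suc j) (fps_X ^ n * G) = (TT al ^^ j) (fps_X ^ n' * TTG al n' G)"
    unfolding n by (simp only: funpow_Suc_right o_apply TT_X)
  then have "fps_nth ((TT al ^^ Suc j) (fps_X ^ n * G)) 0 = fps_nth ((TT al ^^ j) (fps_X ^ n' * TTG al n' G)) 0"
    by (simp only:)
  also have "\<dots> = 0" using Suc n by (intro Suc.IH) simp
  finally show ?case .
qed

lemma L1: "fps_nth ((TT al ^^ n) (fps_X ^ n * G)) 0 = fact n * fps_nth al 0 ^ n * fps_nth G 0"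
proof (induction n arbitrary: G)
  case 0 then show ?case by simp
next
  case (Suc n)
  have "(TT al ^^ Suc n) (fps_X ^ Suc n * G) = (TT al ^^ n) (fps_X ^ n * TTG al n G)"
    by (simp only: funpow_Suc_right o_apply TT_X)
  then have "fps_nth ((TT al ^^ Suc n) (fps_X ^ Suc n * G)) 0 = fps_nth ((TT al ^^ n) (fps_X ^ n * TTG al n G)) 0"
    by (simp only:)
  also have "\<dots> = fact n * fps_nth al 0 ^ n * fps_nth (TTG al n G) 0" by (rule Suc.IH)
  finally show ?case by (simp add: TTG_nth0 algebra_simps)
qed

lemma L2: "fps_nth ((TT al ^^ Suc n) (fps_X ^ n * G)) 0 = fact (Suc n) * fps_nth al 0 ^ n *
   (fps_nth G 0 * real n * (fps_nth al 1 + fps_nth al 0) / 2 + fps_nth al 0 * fps_nth G 1 + fps_nth al 1 * fps_nth G 0)"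
proof (induction n arbitrary: G)
  case 0 then show ?case by (simp add: TT_nth0 fps_mult_nth_1)
next
  case (Suc n)
  have "(TT al ^^ Suc (Suc n)) (fps_X ^ Suc n * G) = (TT al ^^ Suc n) (fps_X ^ n * TTG al n G)"
    by (simp only: funpow_Suc_right o_apply TT_X)
  define a0 where "a0 = fps_nth al 0"
  define a1 where "a1 = fps_nth al 1"
  define g0 where "g0 = fps_nth G 0"
  define g1 where "g1 = fps_nth G 1"
  have key: "((real (Suc n) * a0 * g0) * real n * (a1 + a0) / 2 + a0 * (real (Suc n) * a0 * g0
     + real (Suc (Suc n)) * (a0 * g1 + a1 * g0)) + a1 * (real (Suc n) * a0 * g0))
     = real (Suc (Suc n)) * a0 * (g0 * real (Suc n) * (a1 + a0) / 2 + a0 * g1 + a1 * g0)"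
    by (simp add: field_simps of_nat_Suc)
  have "fps_nth ((TT al ^^ Suc (Suc n)) (fps_X ^ Suc n * G)) 0 = fact (Suc n) * a0 ^ n *
     ((real (Suc n) * a0 * g0) * real n * (a1 + a0) / 2 + a0 * (real (Suc n) * a0 * g0
     + real (Suc (Suc n)) * (a0 * g1 + a1 * g0)) + a1 * (real (Suc n) * a0 * g0))"
    unfolding \<open>(TT al ^^ Suc (Suc n)) (fps_X ^ Suc n * G) = _\<close> Suc.IH TTG_nth0 TTG_nth1 a0_def a1_def g0_def g1_def ..
  also have "\<dots> = fact (Suc (Suc n)) * a0 ^ Suc n * (g0 * real (Suc n) * (a1 + a0) / 2 + a0 * g1 + a1 * g0)"
    unfolding key fact_Suc[of "Suc n"] power_Suc by (simp only: mult_ac)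
  finally show ?case unfolding a0_def a1_def g0_def g1_def .
qed

definition WW :: "real \<Rightarrow> real fps" where "WW t = fps_const t * (1 + fps_X)"
definition alpha :: "real \<Rightarrow> real \<Rightarrow> real fps" where
  "alpha D t = fps_const t * (1 + fps_X) - fps_const (2*D) + fps_const (1/t) * inverse (1 + fps_X)"
definition Phi :: "real \<Rightarrow> real \<Rightarrow> nat \<Rightarrow> real fps" where
  "Phi D t i = (TT (alpha D t) ^^ i) 1"
definition pit :: "real \<Rightarrow> real \<Rightarrow> nat \<Rightarrow> real fps" where
  "pit D t i = fps_of_poly (pcompose (pp D i) [:t,t:])"

lemma inv1X: "inverse (1 + fps_X :: real fps) * (1 + fps_X) = 1"
  by (rule inverse_mult_eq_1) simp

lemma fps_of_poly_tt: "fps_of_poly [:t,t:] = WW t"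
  unfolding WW_def by (simp add: fps_of_poly_pCons fps_of_poly_const algebra_simps)

lemma alphaW: assumes t: "t \<noteq> 0"
  shows "alpha D t * WW t = fps_of_poly (pcompose [:1,-2*D,1:] [:t,t:])"
proof -
  have c: "fps_const (1/t) * fps_const t = (1 :: real fps)"
    using t by (simp add: fps_const_mult[symmetric])
  have "alpha D t * WW t = WW t * WW t - fps_const (2*D) * WW t
      + (fps_const (1/t) * fps_const t) * (inverse (1 + fps_X) * (1 + fps_X))"
    unfolding alpha_def WW_def by (simp add: algebra_simps)
  also have "\<dots> = WW t * WW t - fps_const (2*D) * WW t + 1"
    unfolding c inv1X by simp
  also have "\<dots> = fps_of_poly (pcompose [:1,-2*D,1:] [:t,t:])"
    by (simp only: pcompose_pCons fps_of_poly_add fps_of_poly_mult fps_of_poly_tt fps_of_poly_const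
        pcompose_0 mult_zero_right add_0_right fps_const_neg[symmetric]) (simp add: algebra_simps fps_const_neg[symmetric] del: fps_const_neg)
  finally show ?thesis .
qed

lemma Phi_Suc: "Phi D t (Suc i) = TT (alpha D t) (Phi D t i)"
  unfolding Phi_def by simp

lemma fps_deriv_WW: "fps_deriv (WW t) = fps_const t"
  unfolding WW_def by simp

lemma link: assumes t: "t \<noteq> 0" shows "WW t ^ i * Phi D t i = pit D t i"
proof (induction i)
  case 0 then show ?case by (simp add: Phi_def pit_def pcompose_1)
next
  case (Suc i)
  define A where "A = [:1,-2*D,1:]"
  define r where "r = A * pp D i"
  define al where "al = alpha D t"
  define F where "F = Phi D t i"
  define W where "W = WW t"
  define rho where "rho = fps_of_poly (pcompose r [:t,t:])"
  have rho: "rho = (al * F) * W ^ Suc i"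
  proof -
    have "rho = fps_of_poly (pcompose A [:t,t:]) * pit D t i"
      unfolding rho_def r_def pit_def by (simp add: pcompose_mult fps_of_poly_mult)
    also have "\<dots> = (al * W) * (W ^ i * F)"
      unfolding A_def al_def W_def F_def using alphaW[OF t] Suc.IH by simp
    finally show ?thesis by (simp add: algebra_simps)
  qed
  have drho: "fps_deriv rho = fps_deriv (al * F) * W ^ Suc i + (al * F) * (of_nat (Suc i) * W ^ i * fps_const t)"
  proof -
    have "fps_deriv (W ^ Suc i) = of_nat (Suc i) * W ^ i * fps_const t"
      unfolding W_def by (subst fps_deriv_power) (simp only: fps_of_nat fps_deriv_WW diff_Suc_1 mult_ac)
    then show ?thesis unfolding rho by (simp only: fps_deriv_mult algebra_simps)
  qed
  have drho2: "fps_deriv rho = fps_const t * fps_of_poly (pcompose (pderiv r) [:t,t:])"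
    unfolding rho_def fps_of_poly_pderiv[symmetric] pderiv_pcompose
    by (simp add: fps_of_poly_mult fps_of_poly_const pderiv_pCons mult.commute)
  have WX: "(1 + fps_X) * fps_const t * W ^ i = W ^ Suc i"
    unfolding W_def power_Suc by (simp add: WW_def algebra_simps)
  have "W ^ Suc i * Phi D t (Suc i) = (1 + fps_X) * (fps_deriv (al * F) * W ^ Suc i)"
    unfolding Phi_Suc TT_def al_def F_def by (simp only: mult_ac)
  also have "\<dots> = (1 + fps_X) * fps_deriv rho - of_nat (Suc i) * ((al * F) * W ^ Suc i)"
    unfolding drho WX[symmetric] by (simp add: algebra_simps)
  also have "\<dots> = (1 + fps_X) * fps_deriv rho - of_nat (Suc i) * rho"
    unfolding rho ..
  also have "\<dots> = pit D t (Suc i)"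
  proof -
    have pps: "pp D (Suc i) = [:0,1:] * pderiv r - Polynomial.smult (of_nat (Suc i)) r"
      by (simp add: r_def A_def)
    have pc: "pcompose ([:0,1:] * pderiv r) [:t,t:] = [:t,t:] * pcompose (pderiv r) [:t,t:]"
      by (simp add: pcompose_mult pcompose_pCons)
    have "pit D t (Suc i) = WW t * fps_of_poly (pcompose (pderiv r) [:t,t:]) - of_nat (Suc i) * rho"
      unfolding pit_def pps pcompose_diff pc pcompose_smult fps_of_poly_diff fps_of_poly_mult
        fps_of_poly_smult fps_of_poly_tt rho_def fps_of_nat by simp
    then show ?thesis unfolding drho2 by (simp add: WW_def algebra_simps)
  qed
  finally show ?case unfolding W_def .
qed

lemma inv1X_nth: "fps_nth (inverse (1 + fps_X :: real fps)) 0 = 1" "fps_nth (inverse (1 + fps_X :: real fps)) (Suc 0) = -1"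
proof -
  have "fps_nth (inverse (1 + fps_X :: real fps) * (1 + fps_X)) 0 = 1" "fps_nth (inverse (1 + fps_X :: real fps) * (1 + fps_X)) 1 = 0"
    unfolding inv1X by simp_all
  then show "fps_nth (inverse (1 + fps_X :: real fps)) 0 = 1" "fps_nth (inverse (1 + fps_X :: real fps)) (Suc 0) = -1"
    by (simp_all add: fps_mult_nth_1)
qed

lemma alpha_nth: "fps_nth (alpha D t) 0 = t - 2*D + 1/t" "fps_nth (alpha D t) 1 = t - 1/t"
  unfolding alpha_def by (simp_all add: fps_mult_nth_1 inv1X_nth)

lemma Phi_nth0: assumes t: "t \<noteq> 0" shows "fps_nth (Phi D t i) 0 = phi D i t"
proof -
  have "fps_nth (WW t ^ i * Phi D t i) 0 = fps_nth (pit D t i) 0" using link[OF t] by simp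
  then have "t ^ i * fps_nth (Phi D t i) 0 = poly (pp D i) t"
    by (simp add: WW_def pit_def fps_nth_power_0 poly_0_coeff_0[symmetric] poly_pcompose)
  then show ?thesis using t by (simp add: phi_pp field_simps)
qed

definition Bmat :: "real \<Rightarrow> real \<Rightarrow> nat \<Rightarrow> (nat \<Rightarrow> real) \<Rightarrow> real mat" where
  "Bmat D t n v = mat n n (\<lambda>(i, j). if j = n - 1 then v i else phi D (i + j) t)"

definition CC :: "real \<Rightarrow> real \<Rightarrow> nat \<Rightarrow> nat \<Rightarrow> real" where
  "CC D t n i = cofactor (hankel_mat D t n) i (n - 1)"

lemma cof_B: assumes "i < n" shows "cofactor (Bmat D t n v) i (n - 1) = CC D t n i"
proof -
  have "mat_delete (Bmat D t n v) i (n - 1) = mat_delete (hankel_mat D t n) i (n - 1)"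
    unfolding mat_delete_def Bmat_def hankel_mat_def
    by (intro cong_mat) auto
  then show ?thesis unfolding CC_def cofactor_def by simp
qed

lemma Bmat_idx: "i < n \<Longrightarrow> Bmat D t n v $$ (i, n - 1) = v i"
  unfolding Bmat_def by simp

lemma det_B: assumes "n \<ge> 1" shows "det (Bmat D t n v) = (\<Sum>i<n. v i * CC D t n i)"
proof -
  have "det (Bmat D t n v) = (\<Sum>i<n. Bmat D t n v $$ (i, n - 1) * cofactor (Bmat D t n v) i (n - 1))"
    by (rule laplace_expansion_column) (use assms in \<open>auto simp: Bmat_def\<close>)
  also have "\<dots> = (\<Sum>i<n. v i * CC D t n i)"
    by (intro sum.cong refl) (metis cof_B Bmat_idx lessThan_iff)
  finally show ?thesis .
qed

lemma M_B: "M_mat D t n z = Bmat D t n (\<lambda>i. phi D i (t * z))"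
  unfolding M_mat_def Bmat_def ..

lemma H_B: "hankel_mat D t n = Bmat D t n (\<lambda>i. phi D (i + (n - 1)) t)"
  unfolding hankel_mat_def Bmat_def by (intro cong_mat) auto

lemma sigma_low: assumes "j < n - 1" shows "(\<Sum>i<n. phi D (i + j) t * CC D t n i) = 0"
proof -
  have "(\<Sum>i<n. phi D (i + j) t * CC D t n i) = det (Bmat D t n (\<lambda>i. phi D (i + j) t))"
    using assms by (simp add: det_B)
  also have "\<dots> = 0"
  proof (rule det_identical_columns[of _ n j "n - 1"])
    show "col (Bmat D t n (\<lambda>i. phi D (i + j) t)) j = col (Bmat D t n (\<lambda>i. phi D (i + j) t)) (n - 1)"
      using assms by (intro eq_vecI) (auto simp: Bmat_def)
  qed (use assms in \<open>auto simp: Bmat_def\<close>)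
  finally show ?thesis .
qed

lemma sigma_top: assumes "n \<ge> 1" shows "(\<Sum>i<n. phi D (i + (n - 1)) t * CC D t n i) = det (hankel_mat D t n)"
  using assms by (simp add: det_B H_B)

lemma CC_top: assumes "n \<ge> 1" shows "CC D t n (n - 1) = det (hankel_mat D t (n - 1))"
proof -
  have "mat_delete (hankel_mat D t n) (n - 1) (n - 1) = hankel_mat D t (n - 1)"
    unfolding mat_delete_def hankel_mat_def by (intro cong_mat) auto
  then show ?thesis unfolding CC_def cofactor_def by (simp add: mult_2[symmetric])
qed

lemma CC_sub: assumes "n \<ge> 2"
  shows "CC D t n (n - 2) = - det (Bmat D t (n - 1) (\<lambda>i. phi D (i + (n - 1)) t))"
proof -
  have e: "\<And>j. Suc (j + n - Suc (Suc 0)) = j + n - Suc 0" using assms by auto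
  have "mat_delete (hankel_mat D t n) (n - 2) (n - 1) = transpose_mat (Bmat D t (n - 1) (\<lambda>i. phi D (i + (n - 1)) t))"
    unfolding mat_delete_def hankel_mat_def Bmat_def transpose_mat_def
    using assms by (intro cong_mat) (auto simp: add.commute e simp del: phi.simps)
  moreover have "det (transpose_mat (Bmat D t (n - 1) (\<lambda>i. phi D (i + (n - 1)) t))) = det (Bmat D t (n - 1) (\<lambda>i. phi D (i + (n - 1)) t))"
    by (rule det_transpose[of _ "n - 1"]) (simp add: Bmat_def)
  moreover have "(-1::real) ^ (n - 2 + (n - 1)) = -1"
  proof -
    have "n - 2 + (n - 1) = Suc (2 * (n - 2))" using assms by simp
    then show ?thesis by simp
  qed
  ultimately show ?thesis unfolding CC_def cofactor_def by simp
qed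



lemma TT_lin: "TT al (\<Sum>i\<in>A. fps_const (c i) * f i) = (\<Sum>i\<in>A. fps_const (c i) * TT al (f i))"
  unfolding TT_def by (simp add: sum_distrib_left fps_deriv_sum algebra_simps)

lemma TTpow_lin: "(TT al ^^ j) (\<Sum>i\<in>A. fps_const (c i) * f i) = (\<Sum>i\<in>A. fps_const (c i) * (TT al ^^ j) (f i))"
  by (induction j) (simp_all add: TT_lin)

lemma Phi_add: "(TT (alpha D t) ^^ j) (Phi D t i) = Phi D t (i + j)"
  unfolding Phi_def add.commute[of i j] funpow_add comp_def ..

definition qhat :: "real \<Rightarrow> real \<Rightarrow> nat \<Rightarrow> real fps" where
  "qhat D t n = (\<Sum>i<n. fps_const (CC D t n i) * Phi D t i)"

lemma qhat_sigma: assumes t: "t \<noteq> 0"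
  shows "fps_nth ((TT (alpha D t) ^^ j) (qhat D t n)) 0 = (\<Sum>i<n. phi D (i + j) t * CC D t n i)"
  unfolding qhat_def TTpow_lin Phi_add by (simp add: fps_sum_nth Phi_nth0[OF t] mult.commute)

definition PP :: "real \<Rightarrow> real \<Rightarrow> nat \<Rightarrow> real poly" where
  "PP D t n = (\<Sum>i<n. Polynomial.smult (CC D t n i / t ^ i) ([:0,1:] ^ (n - 1 - i) * pcompose (pp D i) [:0,t:]))"

lemma PP_eval: assumes t: "t \<noteq> 0" and z: "z \<noteq> 0" and n: "n \<ge> 1"
  shows "poly (PP D t n) z = z ^ (n - 1) * det (M_mat D t n z)"
proof -
  have "det (M_mat D t n z) = (\<Sum>i<n. phi D i (t * z) * CC D t n i)"
    unfolding M_B using n by (rule det_B)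
  also have "\<dots> = (\<Sum>i<n. poly (pp D i) (t * z) / (t * z) ^ i * CC D t n i)"
    using t z by (simp add: phi_pp)
  finally have dm: "det (M_mat D t n z) = \<dots>" .
  have "poly (PP D t n) z = (\<Sum>i<n. CC D t n i / t ^ i * (z ^ (n - 1 - i) * poly (pp D i) (t * z)))"
    unfolding PP_def by (simp add: poly_sum poly_pcompose mult.commute)
  also have "\<dots> = (\<Sum>i<n. z ^ (n - 1) * (poly (pp D i) (t * z) / (t * z) ^ i * CC D t n i))"
  proof (intro sum.cong refl)
    fix i assume "i \<in> {..<n}"
    then have "z ^ (n - 1) = z ^ (n - 1 - i) * z ^ i" by (simp add: power_add[symmetric])
    then show "CC D t n i / t ^ i * (z ^ (n - 1 - i) * poly (pp D i) (t * z)) =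
        z ^ (n - 1) * (poly (pp D i) (t * z) / (t * z) ^ i * CC D t n i)"
      using t z by (simp add: field_simps power_mult_distrib)
  qed
  also have "\<dots> = z ^ (n - 1) * det (M_mat D t n z)"
    unfolding dm by (simp add: sum_distrib_left)
  finally show ?thesis .
qed

lemma pcompose_Xpow: "pcompose ([:0,1:] ^ k) q = q ^ k"
  by (induction k) (simp_all add: pcompose_mult pcompose_1 pcompose_pCons)

lemma PP_fps: assumes t: "t \<noteq> 0"
  shows "fps_of_poly (pcompose (PP D t n) [:1,1:]) = (1 + fps_X) ^ (n - 1) * qhat D t n"
proof -
  have "fps_of_poly (pcompose (PP D t n) [:1,1:]) =
     (\<Sum>i<n. fps_const (CC D t n i / t ^ i) * ((1 + fps_X) ^ (n - 1 - i) * pit D t i))"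
  proof -
    have pc: "pcompose (pcompose (pp D i) [:0,t:]) [:1,1:] = pcompose (pp D i) [:t,t:]" for i
      by (simp add: pcompose_assoc[symmetric] pcompose_pCons)
    have f11: "fps_of_poly [:1,1:] = (1 + fps_X :: real fps)"
      by (simp add: fps_of_poly_pCons fps_of_poly_const)
    show ?thesis
      unfolding PP_def pcompose_sum pcompose_smult pcompose_mult pcompose_Xpow pc fps_of_poly_sum
        fps_of_poly_smult fps_of_poly_mult fps_of_poly_power f11 pit_def ..
  qed
  also have "\<dots> = (\<Sum>i<n. (1 + fps_X) ^ (n - 1) * (fps_const (CC D t n i) * Phi D t i))"
  proof (intro sum.cong refl)
    fix i assume i: "i \<in> {..<n}"
    have "(1 + fps_X :: real fps) ^ (n - 1) = (1 + fps_X) ^ (n - 1 - i) * (1 + fps_X) ^ i"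
      using i by (simp add: power_add[symmetric])
    moreover have "pit D t i = fps_const (t ^ i) * (1 + fps_X) ^ i * Phi D t i"
      using link[OF t, of i D] by (simp add: WW_def power_mult_distrib fps_const_power)
    moreover have "fps_const (CC D t n i / t ^ i) * fps_const (t ^ i) = fps_const (CC D t n i)"
      using t by (simp add: fps_const_mult[symmetric])
    ultimately show "fps_const (CC D t n i / t ^ i) * ((1 + fps_X) ^ (n - 1 - i) * pit D t i) =
        (1 + fps_X) ^ (n - 1) * (fps_const (CC D t n i) * Phi D t i)"
      by (simp add: algebra_simps)
  qed
  also have "\<dots> = (1 + fps_X) ^ (n - 1) * qhat D t n"
    unfolding qhat_def by (simp add: sum_distrib_left)
  finally show ?thesis .
qed

lemma onepX_nth: "fps_nth ((1 + fps_X :: real fps) ^ m) 0 = 1" "fps_nth ((1 + fps_X :: real fps) ^ m) (Suc 0) = real m"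
proof -
  show "fps_nth ((1 + fps_X :: real fps) ^ m) 0 = 1" by (simp add: fps_nth_power_0)
  show "fps_nth ((1 + fps_X :: real fps) ^ m) (Suc 0) = real m"
    by (induction m) (simp_all add: fps_nth_power_0)
qed

lemma invpow: "inverse ((1 + fps_X :: real fps) ^ m) * (1 + fps_X) ^ m = 1"
  "fps_nth (inverse ((1 + fps_X :: real fps) ^ m)) 0 = 1"
  "fps_nth (inverse ((1 + fps_X :: real fps) ^ m)) (Suc 0) = - real m"
proof -
  show i: "inverse ((1 + fps_X :: real fps) ^ m) * (1 + fps_X) ^ m = 1"
    by (rule inverse_mult_eq_1) (simp add: onepX_nth)
  show i0: "fps_nth (inverse ((1 + fps_X :: real fps) ^ m)) 0 = 1"
    by (simp add: onepX_nth)
  have "fps_nth (inverse ((1 + fps_X :: real fps) ^ m) * (1 + fps_X) ^ m) (Suc 0) = 0"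
    unfolding i by simp
  then show "fps_nth (inverse ((1 + fps_X :: real fps) ^ m)) (Suc 0) = - real m"
    by (simp add: onepX_nth i0 del: fps_mult_nth_1)
qed

lemma DIV:
  fixes F q al :: "real fps"
  assumes Fq: "F = (1 + fps_X) ^ m * q" and a0: "fps_nth al 0 \<noteq> 0"
    and low: "\<And>j. j < m \<Longrightarrow> fps_nth ((TT al ^^ j) q) 0 = 0"
  shows "\<And>k. k < m \<Longrightarrow> fps_nth F k = 0"
    and "fps_nth ((TT al ^^ m) q) 0 = fact m * fps_nth al 0 ^ m * fps_nth F m"
    and "fps_nth ((TT al ^^ Suc m) q) 0 = fact (Suc m) * fps_nth al 0 ^ m *
      (fps_nth F m * real m * (fps_nth al 1 + fps_nth al 0) / 2
       + fps_nth al 0 * (fps_nth F (Suc m) - real m * fps_nth F m) + fps_nth al 1 * fps_nth F m)"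
proof -
  define Bi where "Bi = inverse ((1 + fps_X :: real fps) ^ m)"
  have qF: "q = Bi * F" unfolding Fq Bi_def by (simp add: mult.assoc[symmetric] invpow)
  have sub: "m \<le> subdegree F" if "F \<noteq> 0"
  proof (rule ccontr)
    assume "\<not> m \<le> subdegree F"
    then have s: "subdegree F < m" by simp
    define s' where "s' = subdegree F"
    have "F = fps_shift s' F * fps_X ^ s'" unfolding s'_def by (simp add: fps_shift_times_fps_X_power)
    then have "q = fps_X ^ s' * (Bi * fps_shift s' F)" unfolding qF by (metis mult.assoc mult.commute)
    then have "fps_nth ((TT al ^^ s') q) 0 = fact s' * fps_nth al 0 ^ s' * fps_nth (Bi * fps_shift s' F) 0"
      using L1 by simp
    also have "\<dots> \<noteq> 0" using a0 that by (simp add: Bi_def invpow s'_def)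
    finally show False using low s unfolding s'_def by blast
  qed
  show "fps_nth F k = 0" if k: "k < m" for k
  proof (cases "F = 0")
    case True then show ?thesis by simp
  next
    case False then show ?thesis using sub[OF False] k by (intro nth_less_subdegree_zero) simp
  qed
  have "F = fps_shift m F * fps_X ^ m"
    using sub by (cases "F = 0") (auto simp: fps_shift_times_fps_X_power)
  then have qG: "q = fps_X ^ m * (Bi * fps_shift m F)" unfolding qF by (metis mult.assoc mult.commute)
  have G0: "fps_nth (Bi * fps_shift m F) 0 = fps_nth F m" by (simp add: Bi_def invpow onepX_nth)
  have G1: "fps_nth (Bi * fps_shift m F) 1 = fps_nth F (Suc m) - real m * fps_nth F m"
    using invpow(2,3)[of m] by (simp add: Bi_def fps_mult_nth_1 del: fps_nth_inverse)
  show "fps_nth ((TT al ^^ m) q) 0 = fact m * fps_nth al 0 ^ m * fps_nth F m"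
    unfolding qG L1 G0 ..
  show "fps_nth ((TT al ^^ Suc m) q) 0 = fact (Suc m) * fps_nth al 0 ^ m *
      (fps_nth F m * real m * (fps_nth al 1 + fps_nth al 0) / 2
       + fps_nth al 0 * (fps_nth F (Suc m) - real m * fps_nth F m) + fps_nth al 1 * fps_nth F m)"
    unfolding qG L2 G0 G1 ..
qed

lemma POLYDIV:
  fixes P :: "real poly"
  assumes low: "\<And>k. k < m \<Longrightarrow> coeff (pcompose P [:1,1:]) k = 0"
  obtains R where "P = [:-1,1:] ^ m * R" "poly R 1 = coeff (pcompose P [:1,1:]) m"
    "poly (pderiv R) 1 = coeff (pcompose P [:1,1:]) (Suc m)"
proof -
  define Pt where "Pt = pcompose P [:1,1:]"
  have "monom 1 m dvd Pt" unfolding monom_1_dvd_iff' Pt_def using low by blast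
  then obtain Rt where Rt: "Pt = monom 1 m * Rt" by (auto simp: dvd_def)
  define R where "R = pcompose Rt [:-1,1:]"
  have bk: "pcompose Pt [:-1,1:] = P"
    unfolding Pt_def pcompose_assoc[symmetric] by (simp add: pcompose_pCons)
  have "P = [:-1,1:] ^ m * R"
    unfolding bk[symmetric] Rt R_def monom_altdef pcompose_mult pcompose_smult pcompose_Xpow by simp
  moreover have "poly R 1 = coeff Pt m"
    unfolding R_def Rt by (simp add: poly_pcompose coeff_monom_mult poly_0_coeff_0)
  moreover have "poly (pderiv R) 1 = coeff Pt (Suc m)"
    unfolding R_def Rt pderiv_pcompose
    by (simp add: poly_pcompose coeff_monom_mult poly_0_coeff_0 pderiv_pCons coeff_pderiv)
  ultimately show ?thesis using that unfolding Pt_def by blast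
qed

definition KK :: "real \<Rightarrow> real \<Rightarrow> nat \<Rightarrow> real" where
  "KK D t n = fact (n - 1) * (t - 2 * D + 1 / t) ^ (n - 1) / det (hankel_mat D t n)"

lemma HP:
  assumes t: "t \<noteq> 0" and n: "n \<ge> 1" and PR: "PP D t n = [:-1,1:] ^ (n - 1) * R"
  shows "h_poly D t n = Polynomial.smult (KK D t n) R"
proof -
  have ev: "poly (Polynomial.smult (KK D t n) R) z = h_raw D t n z" if z: "z \<noteq> 0" "z \<noteq> 1" for z
  proof -
    have "(z - 1) ^ (n - 1) * poly R z = z ^ (n - 1) * det (M_mat D t n z)"
      using PP_eval[OF t z(1) n, of D] unfolding PR by simp
    then have "poly R z = z ^ (n - 1) * det (M_mat D t n z) / (z - 1) ^ (n - 1)"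
      using z by (simp add: field_simps)
    then show ?thesis unfolding h_raw_def KK_def
      by (simp add: power_mult_distrib power_divide mult_ac)
  qed
  have uniq: "p = Polynomial.smult (KK D t n) R" if p: "\<forall>z. z \<noteq> 0 \<and> z \<noteq> 1 \<longrightarrow> poly p z = h_raw D t n z" for p
  proof (rule ccontr)
    assume ne: "p \<noteq> Polynomial.smult (KK D t n) R"
    then have "p - Polynomial.smult (KK D t n) R \<noteq> 0" by simp
    then have fin: "finite {z. poly (p - Polynomial.smult (KK D t n) R) z = 0}" by (rule poly_roots_finite)
    have "- {0, 1} \<subseteq> {z. poly (p - Polynomial.smult (KK D t n) R) z = 0}"
      using p ev by auto
    then have "finite (- {0, 1::real})" using fin finite_subset by blast
    then show False by (simp add: infinite_UNIV_char_0 Compl_eq_Diff_UNIV)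
  qed
  show ?thesis unfolding h_poly_def
    by (rule the_equality) (use ev uniq in auto)
qed

lemma GEN:
  assumes t: "t \<noteq> 0" and a: "t - 2 * D + 1 / t \<noteq> 0" and n: "n \<ge> 1"
  obtains R where "h_poly D t n = Polynomial.smult (KK D t n) R"
    "PP D t n = [:-1,1:] ^ (n - 1) * R"
    "fact (n - 1) * (t - 2 * D + 1 / t) ^ (n - 1) * poly R 1 = det (hankel_mat D t n)"
    "fact n * (t - 2 * D + 1 / t) ^ (n - 1) *
      (poly R 1 * real (n - 1) * ((t - 1 / t) + (t - 2 * D + 1 / t)) / 2
       + (t - 2 * D + 1 / t) * (poly (pderiv R) 1 - real (n - 1) * poly R 1) + (t - 1 / t) * poly R 1)
     = det (Bmat D t n (\<lambda>i. phi D (i + n) t))"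
proof -
  define F where "F = fps_of_poly (pcompose (PP D t n) [:1,1:])"
  define al where "al = alpha D t"
  have Fq: "F = (1 + fps_X) ^ (n - 1) * qhat D t n" unfolding F_def by (rule PP_fps[OF t])
  have a0: "fps_nth al 0 \<noteq> 0" using a by (simp add: al_def alpha_nth)
  have low: "fps_nth ((TT al ^^ j) (qhat D t n)) 0 = 0" if "j < n - 1" for j
    unfolding al_def qhat_sigma[OF t] using that by (rule sigma_low)
  have D1: "fps_nth F k = 0" if "k < n - 1" for k
    using DIV(1)[of F "n - 1" "qhat D t n" al] Fq a0 low that by blast
  have D2: "fps_nth ((TT al ^^ (n - 1)) (qhat D t n)) 0 = fact (n - 1) * fps_nth al 0 ^ (n - 1) * fps_nth F (n - 1)"
    using DIV(2)[of F "n - 1" "qhat D t n" al] Fq a0 low by blast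
  have D3: "fps_nth ((TT al ^^ Suc (n - 1)) (qhat D t n)) 0 = fact (Suc (n - 1)) * fps_nth al 0 ^ (n - 1) *
      (fps_nth F (n - 1) * real (n - 1) * (fps_nth al 1 + fps_nth al 0) / 2
       + fps_nth al 0 * (fps_nth F (Suc (n - 1)) - real (n - 1) * fps_nth F (n - 1)) + fps_nth al 1 * fps_nth F (n - 1))"
    using DIV(3)[of F "n - 1" "qhat D t n" al] Fq a0 low by blast
  have lowc: "coeff (pcompose (PP D t n) [:1,1:]) k = 0" if "k < n - 1" for k
    using D1[OF that] by (simp add: F_def)
  obtain R where R: "PP D t n = [:-1,1:] ^ (n - 1) * R" "poly R 1 = coeff (pcompose (PP D t n) [:1,1:]) (n - 1)"
    "poly (pderiv R) 1 = coeff (pcompose (PP D t n) [:1,1:]) (Suc (n - 1))"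
    using POLYDIV[OF lowc] by blast
  have FR: "fps_nth F (n - 1) = poly R 1" "fps_nth F (Suc (n - 1)) = poly (pderiv R) 1"
    using R by (simp_all add: F_def)
  have e1: "fact (n - 1) * (t - 2 * D + 1 / t) ^ (n - 1) * poly R 1 = det (hankel_mat D t n)"
    using D2 sigma_top[OF n, of D t] unfolding FR al_def qhat_sigma[OF t] by (simp add: alpha_nth)
  have e2: "fact n * (t - 2 * D + 1 / t) ^ (n - 1) *
      (poly R 1 * real (n - 1) * ((t - 1 / t) + (t - 2 * D + 1 / t)) / 2
       + (t - 2 * D + 1 / t) * (poly (pderiv R) 1 - real (n - 1) * poly R 1) + (t - 1 / t) * poly R 1)
     = det (Bmat D t n (\<lambda>i. phi D (i + n) t))"
  proof -
    have sn: "Suc (n - 1) = n" using n by simp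
    have "fps_nth ((TT al ^^ n) (qhat D t n)) 0 = det (Bmat D t n (\<lambda>i. phi D (i + n) t))"
      unfolding al_def qhat_sigma[OF t] using n by (simp add: det_B)
    moreover have "fps_nth (alpha D t) (Suc 0) = t - 1/t" using alpha_nth(2) by simp
    ultimately show ?thesis using D3[unfolded FR] unfolding sn al_def by (simp add: alpha_nth)
  qed
  show ?thesis
    using that[OF HP[OF t n R(1)] R(1) e1 e2] .
qed

lemma coeffX1: "coeff ([:-1,1:] * (Q :: real poly)) 0 = - coeff Q 0" "coeff ([:-1,1:] * Q) 1 = coeff Q 0 - coeff Q 1"
  by (auto simp: algebra_simps)

lemma coeffXm: "coeff ([:-1,1:] ^ m * R) 0 = (-1) ^ m * coeff R 0"
  "coeff ([:-1,1:] ^ m * R) 1 = (-1) ^ m * coeff R 1 - real m * (-1) ^ m * coeff R 0"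
proof -
  have c0: "coeff ([:-1,1:] ^ m * R) 0 = (-1) ^ m * coeff R 0" for m
  proof (induction m)
    case 0 then show ?case by simp
  next
    case (Suc m) then show ?case by (simp only: power_Suc mult.assoc coeffX1) (simp add: algebra_simps)?
  qed
  show "coeff ([:-1,1:] ^ m * R) 0 = (-1) ^ m * coeff R 0" by (rule c0)
  show "coeff ([:-1,1:] ^ m * R) 1 = (-1) ^ m * coeff R 1 - real m * (-1) ^ m * coeff R 0"
  proof (induction m)
    case 0 then show ?case by simp
  next
    case (Suc m)
    have "coeff ([:-1,1:] ^ Suc m * R) 1 = coeff ([:-1,1:] ^ m * R) 0 - coeff ([:-1,1:] ^ m * R) 1"
      by (simp only: power_Suc mult.assoc coeffX1)
    then show ?case using Suc.IH c0[of m] by (simp add: algebra_simps)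
  qed
qed

lemma coeff_Xpow_mult: "coeff ([:0,1:] ^ j * q) k = (if k < j then 0 else coeff q (k - j))"
proof -
  have "[:0,1:] ^ j = (monom 1 j :: 'a::comm_semiring_1 poly)" by (simp add: monom_altdef)
  then show ?thesis by (simp add: coeff_monom_mult)
qed

lemma PP_coeff:
  assumes n: "n = Suc (Suc k)"
  shows "coeff (PP D t n) 0 = CC D t n (Suc k) / t ^ Suc k * coeff (pp D (Suc k)) 0"
    "coeff (PP D t n) 1 = CC D t n (Suc k) / t ^ Suc k * (t * coeff (pp D (Suc k)) 1)
        + CC D t n k / t ^ k * coeff (pp D k) 0"
proof -
  define f where "f = (\<lambda>j i. CC D t n i / t ^ i * coeff ([:0,1:] ^ (n - 1 - i) * pcompose (pp D i) [:0,t:]) j)"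
  have cp: "coeff (PP D t n) j = (\<Sum>i<n. f j i)" for j
    unfolding PP_def f_def by (simp add: coeff_sum)
  have z0: "f 0 i = 0" if "i < Suc k" for i using that unfolding f_def n by (simp add: coeff_Xpow_mult)
  have z1: "f 1 i = 0" if "i < k" for i using that unfolding f_def n by (simp add: coeff_Xpow_mult)
  have split: "(\<Sum>i<n. f j i) = (\<Sum>i<k. f j i) + f j k + f j (Suc k)" for j
    unfolding n by simp
  have s0: "(\<Sum>i<k. f 0 i) = 0" using z0 by (intro sum.neutral) auto
  have s1: "(\<Sum>i<k. f 1 i) = 0" using z1 by (intro sum.neutral) auto
  show "coeff (PP D t n) 0 = CC D t n (Suc k) / t ^ Suc k * coeff (pp D (Suc k)) 0"
    unfolding cp split s0 using z0[of k] by (simp add: f_def n coeff_Xpow_mult coeff_pcompose_linear poly_0_coeff_0)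
  show "coeff (PP D t n) 1 = CC D t n (Suc k) / t ^ Suc k * (t * coeff (pp D (Suc k)) 1)
        + CC D t n k / t ^ k * coeff (pp D k) 0"
    unfolding cp split s1 by (simp add: f_def n coeff_Xpow_mult coeff_pcompose_linear poly_0_coeff_0)
qed

theorem mainTheorem4:
  fixes N :: nat and t \<Delta> :: real
  assumes "N \<ge> 2"
    and "t \<noteq> 0"
    and "poly (h_poly \<Delta> t N) 0 \<noteq> 0"
    and "1 - 2 * \<Delta> * t + t ^ 2 \<noteq> 0"
  shows "poly (pderiv (h_poly \<Delta> t (N - 1))) 1 =
    1 / (1 - 2 * \<Delta> * t + t ^ 2) *
      (poly (pderiv (h_poly \<Delta> t N)) 0 / poly (h_poly \<Delta> t N) 0 - t ^ 2)"
proof -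
  note t = assms(2)
  define k where "k = N - 2"
  have N: "N = Suc (Suc k)" using assms(1) k_def by simp
  define M where "M = Suc k"
  have NM: "N - 1 = M" unfolding M_def N by simp
  define a where "a = t - 2 * \<Delta> + 1 / t"
  define a1 where "a1 = t - 1 / t"
  have ta: "t * a = 1 - 2 * \<Delta> * t + t ^ 2" using t by (simp add: a_def field_simps power2_eq_square)
  have a: "a \<noteq> 0" using ta assms(4) by auto
  have a': "t - 2 * \<Delta> + 1 / t \<noteq> 0" using a a_def by simp
  obtain RN where RN: "h_poly \<Delta> t N = Polynomial.smult (KK \<Delta> t N) RN"
    "PP \<Delta> t N = [:-1,1:] ^ (N - 1) * RN"
    using GEN[OF t a', of N] N by auto
  obtain RM where RM: "h_poly \<Delta> t M = Polynomial.smult (KK \<Delta> t M) RM"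
    "fact (M - 1) * (t - 2 * \<Delta> + 1 / t) ^ (M - 1) * poly RM 1 = det (hankel_mat \<Delta> t M)"
    "fact M * (t - 2 * \<Delta> + 1 / t) ^ (M - 1) *
      (poly RM 1 * real (M - 1) * ((t - 1 / t) + (t - 2 * \<Delta> + 1 / t)) / 2
       + (t - 2 * \<Delta> + 1 / t) * (poly (pderiv RM) 1 - real (M - 1) * poly RM 1) + (t - 1 / t) * poly RM 1)
     = det (Bmat \<Delta> t M (\<lambda>i. phi \<Delta> (i + M) t))"
    using GEN[OF t a', of M] M_def by auto
  define H where "H = det (hankel_mat \<Delta> t M)"
  define S where "S = det (Bmat \<Delta> t M (\<lambda>i. phi \<Delta> (i + M) t))"
  define F where "F = (fact k :: real)"
  define g0 where "g0 = poly RM 1"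
  define g1 where "g1 = poly (pderiv RM) 1"
  define R0 where "R0 = coeff RN 0"
  define R1 where "R1 = coeff RN 1"
  define KN where "KN = KK \<Delta> t N"
  have Mk: "M - 1 = k" unfolding M_def by simp
  have F: "F \<noteq> 0" unfolding F_def by simp
  have factM: "fact M = real M * F" unfolding M_def F_def by simp
  have e1: "F * a ^ k * g0 = H" using RM(2) unfolding Mk F_def a_def g0_def H_def .
  have e2: "real M * F * a ^ k * (g0 * real k * (a1 + a) / 2 + a * (g1 - real k * g0) + a1 * g0) = S"
    using RM(3) unfolding Mk factM a_def a1_def g0_def g1_def S_def by (simp add: mult.assoc)
  have lhs: "poly (pderiv (h_poly \<Delta> t (N - 1))) 1 = F * a ^ k / H * g1"
    unfolding NM RM(1) KK_def Mk by (simp add: F_def a_def g1_def H_def pderiv_smult)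
  have hN0: "poly (h_poly \<Delta> t N) 0 = KN * R0"
    unfolding RN(1) by (simp add: KN_def R0_def poly_0_coeff_0)
  have hN1: "poly (pderiv (h_poly \<Delta> t N)) 0 = KN * R1"
    unfolding RN(1) by (simp add: KN_def R1_def poly_0_coeff_0 coeff_pderiv pderiv_smult)
  have KN: "KN \<noteq> 0" and R0: "R0 \<noteq> 0" using assms(3) hN0 by auto
  have CCtop: "CC \<Delta> t N (Suc k) = H"
    using CC_top[of N \<Delta> t] unfolding H_def NM M_def N by simp
  have CCsub: "CC \<Delta> t N k = - S"
    using CC_sub[of N \<Delta> t] unfolding S_def NM M_def N by simp
  have c0: "coeff (pp \<Delta> M) 0 = (-1) ^ M * real M * F" "coeff (pp \<Delta> k) 0 = (-1) ^ k * F"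
    by (simp_all add: pp_coeff0 F_def M_def)
  have d1: "coeff (pp \<Delta> M) 1 = - \<Delta> * real k * coeff (pp \<Delta> M) 0"
  proof -
    have rM: "real M - 1 = real k" unfolding M_def by simp
    have "real M * coeff (pp \<Delta> M) 1 = real M * (- \<Delta> * real k * coeff (pp \<Delta> M) 0)"
      using pp_coeff1[of M \<Delta>] unfolding rM by (simp add: algebra_simps)
    moreover have "real M \<noteq> 0" unfolding M_def by simp
    ultimately show ?thesis by (metis mult_left_cancel mult_minus_left)
  qed
  have P0: "(-1) ^ M * R0 = H / t ^ M * coeff (pp \<Delta> M) 0"
    using PP_coeff(1)[OF N, of \<Delta> t] coeffXm(1)[of M RN] RN(2) unfolding NM CCtop R0_def M_def
    by simp
  have P1: "(-1) ^ M * R1 - real M * (-1) ^ M * R0 = H / t ^ M * (t * coeff (pp \<Delta> M) 1) + (- S) / t ^ k * coeff (pp \<Delta> k) 0"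
    using PP_coeff(2)[OF N, of \<Delta> t] coeffXm(2)[of M RN] RN(2) unfolding NM CCtop CCsub R0_def R1_def M_def
    by simp
  define sg where "sg = ((-1) ^ k :: real)"
  have sgM: "(-1) ^ M = - sg" unfolding sg_def M_def by simp
  have sg2: "sg * sg = 1" unfolding sg_def by (simp add: power_mult_distrib[symmetric])
  have sg3: "\<And>x. sg * (sg * x) = x" using sg2 by (metis mult.assoc mult_1)
  have tM: "t ^ M = t * t ^ k" unfolding M_def by simp
  have Mpos: "real M \<noteq> 0" unfolding M_def by simp
  have tk: "t ^ k \<noteq> 0" using t by simp
  have r0: "R0 = H * real M * F / t ^ M"
  proof -
    have "- sg * R0 = - sg * (H / t ^ M * real M * F)" using P0 unfolding c0 sgM sg_def[symmetric] by (simp add: algebra_simps)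
    then have "sg * (- sg * R0) = sg * (- sg * (H / t ^ M * real M * F))" by simp
    then show ?thesis using sg2 by (simp add: algebra_simps sg3)
  qed
  have H: "H \<noteq> 0" using R0 r0 by auto
  have r1: "R1 = real M * R0 + (S * F - H * \<Delta> * real k * real M * F) / t ^ k"
  proof -
    have "- sg * R1 + real M * sg * R0 = sg * (H / t ^ M * t * \<Delta> * real k * real M * F) - S / t ^ k * sg * F"
      using P1 unfolding d1 c0 sgM sg_def[symmetric] by (simp add: algebra_simps)
    then have "sg * (- sg * R1 + real M * sg * R0) = sg * (sg * (H / t ^ M * t * \<Delta> * real k * real M * F) - S / t ^ k * sg * F)"
      by simp
    then have "- R1 + real M * R0 = (H / t ^ M * t * \<Delta> * real k * real M * F) - S / t ^ k * F"
      using sg2 by (simp add: algebra_simps sg3)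
    then show ?thesis using t tk unfolding tM by (simp add: field_simps)
  qed
  have ratio: "R1 / R0 = real M + t * S / (real M * H) - t * \<Delta> * real k"
    unfolding r1 r0 tM using t tk H F Mpos by (simp add: field_simps)
  have g0: "g0 = H / (F * a ^ k)" using e1 F a by (simp add: field_simps)
  have g0nz: "g0 \<noteq> 0" using g0 H F a by simp
  have lhs2: "F * a ^ k / H * g1 = g1 / g0" unfolding g0 using H F a by (simp add: field_simps)
  have e3: "real k * (a1 + a) / 2 + a * (g1 / g0 - real k) + a1 = S / (real M * H)"
  proof -
    have "real M * F * a ^ k = real M * H / g0" using e1 g0nz by (simp add: field_simps)
    then have "real M * H / g0 * (g0 * real k * (a1 + a) / 2 + a * (g1 - real k * g0) + a1 * g0) = S"
      using e2 by simp
    then show ?thesis using g0nz H Mpos by (simp add: field_simps)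
  qed
  define x where "x = g1 / g0"
  define r where "r = S / (real M * H)"
  have xr: "x = (r - real k * (a1 + a) / 2 - a1) / a + real k"
    using e3 a unfolding x_def[symmetric] r_def[symmetric] by (simp add: field_simps)
  have rhs: "poly (pderiv (h_poly \<Delta> t N)) 0 / poly (h_poly \<Delta> t N) 0 = real M + t * r - t * \<Delta> * real k"
    unfolding hN0 hN1 using KN ratio unfolding r_def by (simp add: field_simps)
  have Mk1: "real M = real k + 1" unfolding M_def by simp
  have fin: "x = 1 / (t * a) * (real M + t * r - t * \<Delta> * real k - t ^ 2)"
  proof -
    have "t * a * x = t * (r - real k * (a1 + a) / 2 - a1) + t * a * real k"
      unfolding xr using a by (simp add: field_simps)
    also have "\<dots> = real M + t * r - t * \<Delta> * real k - t ^ 2"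
      unfolding a_def a1_def Mk1 using t by (simp add: field_simps power2_eq_square)
    finally have "t * a * x = real M + t * r - t * \<Delta> * real k - t ^ 2" .
    then show ?thesis using t a by (simp add: field_simps)
  qed
  show ?thesis unfolding lhs lhs2 rhs x_def[symmetric] ta[symmetric] fin by simp
qed

end
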